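(* Consider the system $\dot x=f(x)+g(x)(u+\Delta(x,t))$, $x\in\mathbb{R}^n$, $u\in\mathbb{R}^m$, $m<n$, with $f$ $\mathcal{C}^2$, the columns of $g$ linearly independent and locally Lipschitz, and $\|\Delta(x,t)\|\le\Delta_M$. Let $x_\star$ be a $T$-periodic solution of $\dot x=f(x)$ with $\|f(x_\star(t))\|>0$ and orbit $\eta_\star$, and let $k$ be $\mathcal{C}^2$ with $k(x_\star(t))\equiv0$ rendering $x_\star$ exponentially orbitally stable for $\dot\chi=f(\chi)+g(\chi)k(\chi)$. Let $\sigma:\mathbb{R}^n\to\mathbb{R}^m$ solve Problem 1. Then there exists a tubular neighbourhood $\mathcal N$ of $\eta_\star$ such that, if the states of the system are restricted to $\Sigma=\{x:\sigma(x)=0\}$ within $\mathcal N$, all solutions converge to $\eta_\star$; equivalently, $x_\star$ is asymptotically orbitally stable therein.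
   Context: Equivalent control: for a switching function $\sigma$, the control $u_{eq}$ obtained from requiring $\frac{d}{dt}\sigma(x(t))\equiv0$ along motions on $\Sigma$; motion in sliding mode evolves as the system with $u=u_{eq}$. Problem 1: find a time-invariant $\mathcal{C}^2$ map $\sigma:\mathbb{R}^n\to\mathbb{R}^m$ such that, when restricted to $\Sigma$, for any $x$ in some tubular neighbourhood of $\eta_\star$ the system experiences $u_{eq}=\hat k(x)-\Delta(x,t)$, where $\hat k$ is $\mathcal{C}^1$ with $\hat k(y)=0$ and $D\hat k(y)=Dk(y)$ for all $y\in\eta_\star$. *)

theory Defs
  imports "HOL-Analysis.Analysis"
begin

definition C1_on :: "'a::real_normed_vector set \<Rightarrow> ('a \<Rightarrow> 'b::real_normed_vector) \<Rightarrow> bool" where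
  "C1_on S F \<longleftrightarrow> (\<exists>F'. (\<forall>x\<in>S. (F has_derivative blinfun_apply (F' x)) (at x)) \<and> continuous_on S F')"

definition C2_on :: "'a::real_normed_vector set \<Rightarrow> ('a \<Rightarrow> 'b::real_normed_vector) \<Rightarrow> bool" where
  "C2_on S F \<longleftrightarrow> (\<exists>F'. (\<forall>x\<in>S. (F has_derivative blinfun_apply (F' x)) (at x)) \<and> C1_on S F')"

definition tube :: "'a::metric_space set \<Rightarrow> real \<Rightarrow> 'a set" where
  "tube eta e = {x. infdist x eta < e}"

text \<open>Exponential orbital stability of the orbit eta for the autonomous system chi' = F chi
  (time-invariant, so initial time 0 is taken).\<close>

definition exp_orbitally_stable :: "('a::euclidean_space \<Rightarrow> 'a) \<Rightarrow> 'a set \<Rightarrow> bool" where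
  "exp_orbitally_stable F eta \<longleftrightarrow>
     (\<exists>\<delta>>0. \<exists>C>0. \<exists>lam>0. \<forall>chi b.
        b \<ge> 0 \<and> (\<forall>t\<in>{0..b}. (chi has_vector_derivative F (chi t)) (at t within {0..b}))
        \<and> infdist (chi 0) eta < \<delta>
        \<longrightarrow> (\<forall>t\<in>{0..b}. infdist (chi t) eta \<le> C * exp (- lam * t) * infdist (chi 0) eta))"

text \<open>Equivalent control: the u making d/dt sigma(x(t)) = 0 along motions of
  x' = f x + g x (u + Delta x t).\<close>

definition ueq_set ::
  "(real^'n::finite \<Rightarrow> real^'m::finite) \<Rightarrow> (real^'n \<Rightarrow> real^'n) \<Rightarrow> (real^'n \<Rightarrow> real^'m^'n)
     \<Rightarrow> (real^'n \<Rightarrow> real \<Rightarrow> real^'m) \<Rightarrow> real^'n \<Rightarrow> real \<Rightarrow> (real^'m) set" where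
  "ueq_set \<sigma> f g \<Delta> x t = {u. frechet_derivative \<sigma> (at x) (f x + g x *v (u + \<Delta> x t)) = 0}"

definition ueq ::
  "(real^'n::finite \<Rightarrow> real^'m::finite) \<Rightarrow> (real^'n \<Rightarrow> real^'n) \<Rightarrow> (real^'n \<Rightarrow> real^'m^'n)
     \<Rightarrow> (real^'n \<Rightarrow> real \<Rightarrow> real^'m) \<Rightarrow> real^'n \<Rightarrow> real \<Rightarrow> real^'m" where
  "ueq \<sigma> f g \<Delta> x t = (THE u. u \<in> ueq_set \<sigma> f g \<Delta> x t)"

text \<open>Problem 1: sigma is C^2 and, on Sigma within some tubular neighbourhood of eta,
  the equivalent control is (uniquely) khat x - Delta x t, with khat C^1,
  khat = 0 and D khat = D k on eta.\<close>

definition solves_problem1 ::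
  "(real^'n::finite \<Rightarrow> real^'n) \<Rightarrow> (real^'n \<Rightarrow> real^'m::finite^'n) \<Rightarrow> (real^'n \<Rightarrow> real \<Rightarrow> real^'m)
     \<Rightarrow> (real^'n \<Rightarrow> real^'m) \<Rightarrow> (real^'n) set \<Rightarrow> (real^'n \<Rightarrow> real^'m) \<Rightarrow> bool" where
  "solves_problem1 f g \<Delta> k eta \<sigma> \<longleftrightarrow>
     C2_on UNIV \<sigma> \<and>
     (\<exists>e>0. \<exists>khat :: real^'n \<Rightarrow> real^'m.
        C1_on UNIV khat \<and>
        (\<forall>y\<in>eta. khat y = 0 \<and> frechet_derivative khat (at y) = frechet_derivative k (at y)) \<and>
        (\<forall>x\<in>{x. \<sigma> x = 0} \<inter> tube eta e. \<forall>t. ueq_set \<sigma> f g \<Delta> x t = {khat x - \<Delta> x t}))"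

definition sliding_motion ::
  "(real^'n::finite \<Rightarrow> real^'n) \<Rightarrow> (real^'n \<Rightarrow> real^'m::finite^'n) \<Rightarrow> (real^'n \<Rightarrow> real \<Rightarrow> real^'m)
     \<Rightarrow> (real^'n \<Rightarrow> real^'m) \<Rightarrow> (real^'n) set \<Rightarrow> (real \<Rightarrow> real^'n) \<Rightarrow> real \<Rightarrow> bool" where
  "sliding_motion f g \<Delta> \<sigma> N x t0 \<longleftrightarrow>
     (\<forall>t\<ge>t0. \<sigma> (x t) = 0 \<and> x t \<in> N \<and>
        (x has_vector_derivative
           (f (x t) + g (x t) *v (ueq \<sigma> f g \<Delta> (x t) t + \<Delta> (x t) t))) (at t within {t0..}))"

end

theory Submission
  imports Defs
begin


lemma mv_bound:
  fixes A :: "real^'m^'n" and v :: "real^'m"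
  shows "norm (A *v v) \<le> (real CARD('n) * real CARD('m) * norm A) * norm v"
proof -
  have "onorm ((*v) A) \<le> real CARD('n) * real CARD('m) * norm A"
    by (rule onorm_le_matrix_component) (meson component_le_norm_cart Finite_Cartesian_Product.norm_nth_le order_trans)
  moreover have "norm (A *v v) \<le> onorm ((*v) A) * norm v"
    by (rule onorm) (simp add: matrix_vector_mul_bounded_linear)
  ultimately show ?thesis by (meson mult_right_mono norm_ge_zero order_trans)
qed

lemma C1_lip_cball:
  fixes h :: "'a::euclidean_space \<Rightarrow> 'b::real_normed_vector"
  assumes "\<And>x. (h has_derivative blinfun_apply (h' x)) (at x)" "continuous_on UNIV h'"
  shows "\<exists>L. L-lipschitz_on (cball c R) h"
proof -
  have "compact (h' ` cball c R)"
    by (rule compact_continuous_image) (auto intro: continuous_on_subset[OF assms(2)])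
  then obtain B where B: "\<And>x. x \<in> cball c R \<Longrightarrow> norm (h' x) \<le> B"
    by (meson bounded_iff compact_imp_bounded imageI)
  have "norm (h x - h y) \<le> max B 0 * norm (x - y)" if "x \<in> cball c R" "y \<in> cball c R" for x y
  proof -
    have "norm (h x - h y) \<le> B * norm (x - y)"
      by (rule differentiable_bound[where f'="\<lambda>x. blinfun_apply (h' x)" and S="cball c R"])
        (use that B assms(1) in \<open>auto simp: norm_blinfun.rep_eq intro: has_derivative_at_withinI\<close>)
    also have "\<dots> \<le> max B 0 * norm (x - y)" by (simp add: mult_right_mono)
    finally show ?thesis .
  qed
  then show ?thesis by (intro exI[of _ "max B 0"] lipschitz_onI) (auto simp: dist_norm)
qed

lemma loclip_compact:
  fixes g :: "'a::euclidean_space \<Rightarrow> 'b::metric_space"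
  assumes "\<forall>x. \<exists>e>0. \<exists>L. L-lipschitz_on (ball x e) g" "compact K"
  shows "\<exists>L. L-lipschitz_on K g"
proof -
  have ll: "local_lipschitz {0::real} K (\<lambda>_. g)"
  proof (rule local_lipschitzI)
    fix t x assume "t \<in> {0::real}" "x \<in> K"
    obtain e L where "e > 0" "L-lipschitz_on (ball x e) g" using assms(1) by blast
    moreover have "cball x (e/2) \<inter> K \<subseteq> ball x e" using \<open>e > 0\<close> by auto
    ultimately have "L-lipschitz_on (cball x (e/2) \<inter> K) g"
      using lipschitz_on_subset by blast
    then show "\<exists>u>0. \<exists>L. \<forall>t\<in>cball t u \<inter> {0}. L-lipschitz_on (cball x u \<inter> K) g"
      using \<open>e > 0\<close> by (intro exI[of _ "e/2"]) auto
  qed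
  obtain L where "\<And>t. t \<in> {0::real} \<Longrightarrow> L-lipschitz_on K g"
    by (rule local_lipschitz_compact_implies_lipschitz[OF ll assms(2)]) auto
  then show ?thesis by blast
qed



lemma gronwall:
  fixes w :: "real \<Rightarrow> real"
  assumes cw: "continuous_on {0..b} w" and a: "0 \<le> a" and K: "0 \<le> K"
    and le: "\<And>t. t \<in> {0..b} \<Longrightarrow> w t \<le> a + K * integral {0..t} w"
    and t: "t \<in> {0..b}"
  shows "w t \<le> a * exp (K * t)"
proof -
  define v where "v s = exp (- K * s) * (a + K * integral {0..s} w)" for s
  define v' where "v' s = K * exp (- K * s) * (w s - a - K * integral {0..s} w)" for s
  have dI: "((\<lambda>u. integral {0..u} w) has_field_derivative w s) (at s within {0..t})"
    if "s \<in> {0..t}" for s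
  proof -
    have "((\<lambda>u. integral {0..u} w) has_vector_derivative w s) (at s within {0..b})"
      by (rule integral_has_vector_derivative[OF cw]) (use that t in auto)
    then have "((\<lambda>u. integral {0..u} w) has_field_derivative w s) (at s within {0..b})"
      by (simp add: has_real_derivative_iff_has_vector_derivative)
    then show ?thesis by (rule DERIV_subset) (use t in auto)
  qed
  have dv: "(v has_field_derivative v' s) (at s within {0..t})" if "s \<in> {0..t}" for s
    unfolding v_def v'_def
    by (rule derivative_eq_intros dI[OF that] refl | simp)+ (simp add: algebra_simps)
  have "v' s \<le> 0" if "s \<in> {0..t}" for s
  proof -
    have "w s - a - K * integral {0..s} w \<le> 0" using le[of s] that t by auto
    then show ?thesis unfolding v'_def using K by (simp add: mult_nonneg_nonpos)
  qed
  note vneg = this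
  have "\<exists>x\<in>{0..t}. v t - v 0 = v' x * (t - 0)"
    by (rule mvt_very_simple) (use t dv in \<open>auto simp: has_field_derivative_def\<close>)
  then obtain x where "x \<in> {0..t}" "v t - v 0 = t * v' x" by (auto simp: mult.commute)
  have "t * v' x \<le> 0" using t vneg[OF \<open>x \<in> {0..t}\<close>] by (intro mult_nonneg_nonpos) auto
  with \<open>v t - v 0 = t * v' x\<close> have "v t \<le> v 0" by linarith
  then have "exp (- K * t) * (a + K * integral {0..t} w) \<le> a" by (simp add: v_def)
  then have "a + K * integral {0..t} w \<le> a * exp (K * t)"
    by (simp add: exp_minus field_simps)
  with le[OF t] show ?thesis by linarith
qed



lemma int_bound_exp:
  fixes L D u :: real
  assumes "L > 0" "0 \<le> u"
  shows "((\<lambda>s. L * exp (2 * L * s) * D) has_integral (D * exp (2 * L * u) / 2 - D / 2)) {0..u}"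
proof -
  have "((\<lambda>s. L * exp (2 * L * s) * D) has_integral (D * exp (2 * L * u) / 2 - D * exp (2 * L * 0) / 2)) {0..u}"
    apply (rule fundamental_theorem_of_calculus[of 0 u "\<lambda>s. D * exp (2 * L * s) / 2"])
    using assms apply simp
    apply (simp add: has_real_derivative_iff_has_vector_derivative[symmetric])
    apply (rule derivative_eq_intros refl | simp)+
    done
  then show ?thesis by simp
qed

lemma ode_exists:
  fixes G :: "'a::euclidean_space \<Rightarrow> 'a"
  assumes lip: "\<And>x y. norm (G x - G y) \<le> L * norm (x - y)" and L: "L > 0"
    and bnd: "\<And>x. norm (G x) \<le> B" and tau: "\<tau> \<ge> 0"
  shows "\<exists>y. y 0 = x0 \<and> (\<forall>t\<in>{0..\<tau>}. (y has_vector_derivative G (y t)) (at t within {0..\<tau>}))"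
proof -
  have contG: "continuous_on UNIV G"
    by (rule lipschitz_on_continuous_on[of L]) (use lip L in \<open>auto intro!: lipschitz_onI simp: dist_norm\<close>)
  define c where "c t = max 0 (min \<tau> t)" for t
  have c_in: "c t \<in> {0..\<tau>}" for t using tau by (auto simp: c_def)
  have c_id: "t \<in> {0..\<tau>} \<Longrightarrow> c t = t" for t by (auto simp: c_def)
  have cont_c: "continuous_on UNIV c" unfolding c_def by (intro continuous_intros)
  define Y where "Y \<psi> s = exp (2 * L * s) *\<^sub>R apply_bcontfun \<psi> s" for \<psi> :: "real \<Rightarrow>\<^sub>C 'a" and s
  have contY: "continuous_on S (Y \<psi>)" for \<psi> S unfolding Y_def
    by (intro continuous_intros continuous_on_subset[OF continuous_on_apply_bcontfun]) auto
  have contGY: "continuous_on S (\<lambda>s. G (Y \<psi> s))" for \<psi> S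
    by (rule continuous_on_compose2[OF contG contY]) auto
  have intGY: "(\<lambda>s. G (Y \<psi> s)) integrable_on {0..u}" for \<psi> u
    by (rule integrable_continuous_interval[OF contGY])
  have intbound: "norm (integral {0..u} (\<lambda>s. G (Y \<psi> s))) \<le> B * \<tau>" if "u \<in> {0..\<tau>}" for \<psi> u
  proof -
    have "norm (integral {0..u} (\<lambda>s. G (Y \<psi> s))) \<le> integral {0..u} (\<lambda>s. B)"
      by (rule integral_norm_bound_integral[OF intGY]) (auto simp: bnd)
    also have "\<dots> = B * u" using that by simp
    also have "\<dots> \<le> B * \<tau>" using that order_trans[OF norm_ge_zero bnd[of x0]] by (intro mult_left_mono) auto
    finally show ?thesis .
  qed
  define \<Phi> where "\<Phi> \<psi> t = exp (- 2 * L * c t) *\<^sub>R (x0 + integral {0..c t} (\<lambda>s. G (Y \<psi> s)))" for \<psi> t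
  have Phi_bc: "\<Phi> \<psi> \<in> bcontfun" for \<psi>
  proof (rule bcontfun_normI)
    have "continuous_on {0..\<tau>} (\<lambda>u. exp (- 2 * L * u) *\<^sub>R (x0 + integral {0..u} (\<lambda>s. G (Y \<psi> s))))"
      by (intro continuous_intros indefinite_integral_continuous_1 intGY)
    then show "continuous_on UNIV (\<Phi> \<psi>)" unfolding \<Phi>_def
      by (rule continuous_on_compose2[OF _ cont_c]) (use c_in in auto)
    fix t
    have "norm (\<Phi> \<psi> t) \<le> 1 * (norm x0 + B * \<tau>)"
      unfolding \<Phi>_def norm_scaleR
      apply (rule mult_mono)
      using c_in[of t] L apply simp
      apply (rule order_trans[OF norm_triangle_ineq]) using intbound[OF c_in[of t], of \<psi>] apply simp
      apply simp
      apply simp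
      done
    then show "norm (\<Phi> \<psi> t) \<le> norm x0 + B * \<tau>" by simp
  qed
  define Q where "Q \<psi> = Bcontfun (\<Phi> \<psi>)" for \<psi>
  have Q_app: "apply_bcontfun (Q \<psi>) = \<Phi> \<psi>" for \<psi> unfolding Q_def by (rule Bcontfun_inverse[OF Phi_bc])
  have contr: "dist (Q \<psi>1) (Q \<psi>2) \<le> 1/2 * dist \<psi>1 \<psi>2" for \<psi>1 \<psi>2
  proof (rule dist_bound)
    fix t
    define D where "D = dist \<psi>1 \<psi>2"
    define u where "u = c t"
    have u: "u \<in> {0..\<tau>}" using c_in u_def by auto
    have pt: "norm (G (Y \<psi>1 s) - G (Y \<psi>2 s)) \<le> L * exp (2 * L * s) * D" for s
    proof -
      have "norm (G (Y \<psi>1 s) - G (Y \<psi>2 s)) \<le> L * norm (Y \<psi>1 s - Y \<psi>2 s)" by (rule lip)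
      also have "Y \<psi>1 s - Y \<psi>2 s = exp (2 * L * s) *\<^sub>R (apply_bcontfun \<psi>1 s - apply_bcontfun \<psi>2 s)"
        unfolding Y_def by (simp add: algebra_simps)
      also have "L * norm \<dots> = L * exp (2 * L * s) * norm (apply_bcontfun \<psi>1 s - apply_bcontfun \<psi>2 s)"
        by simp
      also have "\<dots> \<le> L * exp (2 * L * s) * D"
        using dist_bounded[of \<psi>1 s \<psi>2] L unfolding D_def dist_norm by (intro mult_left_mono) auto
      finally show ?thesis .
    qed
    have "norm (integral {0..u} (\<lambda>s. G (Y \<psi>1 s)) - integral {0..u} (\<lambda>s. G (Y \<psi>2 s)))
        = norm (integral {0..u} (\<lambda>s. G (Y \<psi>1 s) - G (Y \<psi>2 s)))"
      by (simp add: integral_diff[OF intGY intGY])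
    also have "\<dots> \<le> integral {0..u} (\<lambda>s. L * exp (2 * L * s) * D)"
      by (rule integral_norm_bound_integral) (use intGY int_bound_exp[OF L, of u D] u pt in \<open>auto intro: integrable_diff\<close>)
    also have "\<dots> = D * exp (2 * L * u) / 2 - D / 2"
      by (rule integral_unique[OF int_bound_exp[OF L]]) (use u in auto)
    finally have I: "norm (integral {0..u} (\<lambda>s. G (Y \<psi>1 s)) - integral {0..u} (\<lambda>s. G (Y \<psi>2 s)))
        \<le> D * exp (2 * L * u) / 2 - D / 2" .
    have "dist (apply_bcontfun (Q \<psi>1) t) (apply_bcontfun (Q \<psi>2) t)
       = exp (- 2 * L * u) * norm (integral {0..u} (\<lambda>s. G (Y \<psi>1 s)) - integral {0..u} (\<lambda>s. G (Y \<psi>2 s)))"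
      unfolding Q_app \<Phi>_def u_def[symmetric] dist_norm
      by (simp add: scaleR_diff_right[symmetric])
    also have "\<dots> \<le> exp (- 2 * L * u) * (D * exp (2 * L * u) / 2 - D / 2)"
      by (rule mult_left_mono[OF I]) simp
    also have "\<dots> = D / 2 - exp (- 2 * L * u) * D / 2"
      by (simp add: algebra_simps exp_minus_inverse mult_exp_exp)
    also have "\<dots> \<le> 1/2 * D" using D_def by simp
    finally show "dist (apply_bcontfun (Q \<psi>1) t) (apply_bcontfun (Q \<psi>2) t) \<le> 1/2 * dist \<psi>1 \<psi>2"
      by (simp add: D_def)
  qed
  obtain \<psi> where fixQ: "Q \<psi> = \<psi>"
    using banach_fix_type[of "1/2" Q] contr by auto
  define y where "y = Y \<psi>"
  have yeq: "y t = x0 + integral {0..t} (\<lambda>s. G (y s))" if "t \<in> {0..\<tau>}" for t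
  proof -
    have "apply_bcontfun \<psi> t = \<Phi> \<psi> t" using fixQ Q_app by metis
    then have "y t = exp (2 * L * t) *\<^sub>R \<Phi> \<psi> t" by (simp add: y_def Y_def)
    also have "\<dots> = x0 + integral {0..t} (\<lambda>s. G (Y \<psi> s))"
      unfolding \<Phi>_def c_id[OF that] by (simp add: mult_exp_exp)
    finally show ?thesis by (simp add: y_def)
  qed
  have "y 0 = x0" using yeq[of 0] tau by simp
  moreover have "(y has_vector_derivative G (y t)) (at t within {0..\<tau>})" if "t \<in> {0..\<tau>}" for t
  proof (rule has_vector_derivative_transform[OF that])
    show "y s = x0 + integral {0..s} (\<lambda>s. G (y s))" if "s \<in> {0..\<tau>}" for s using yeq[OF that] .
    show "((\<lambda>s. x0 + integral {0..s} (\<lambda>s. G (y s))) has_vector_derivative G (y t)) (at t within {0..\<tau>})"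
      by (rule derivative_eq_intros integral_has_vector_derivative refl that | simp add: y_def contGY)+
  qed
  ultimately show ?thesis by blast
qed



lemma C2_deriv:
  assumes "C2_on UNIV h"
  shows "\<exists>h'. (\<forall>x. (h has_derivative blinfun_apply (h' x)) (at x)) \<and> continuous_on UNIV h'"
proof -
  obtain h' h'' where d: "\<forall>x. (h has_derivative blinfun_apply (h' x)) (at x)"
    and d2: "\<forall>x. (h' has_derivative blinfun_apply (h'' x)) (at x)"
    using assms unfolding C2_on_def C1_on_def by blast
  have "continuous_on UNIV h'"
    by (rule continuous_at_imp_continuous_on) (use d2 has_derivative_continuous in blast)
  with d show ?thesis by blast
qed

lemma C1_deriv:
  assumes "C1_on UNIV h"
  shows "\<exists>h'. (\<forall>x. (h has_derivative blinfun_apply (h' x)) (at x)) \<and> continuous_on UNIV h'"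
  using assms unfolding C1_on_def by blast

lemma little_o_dist:
  fixes h :: "'a::euclidean_space \<Rightarrow> 'b::real_normed_vector"
  assumes E: "compact E" "E \<noteq> {}"
    and d: "\<And>x. (h has_derivative blinfun_apply (h' x)) (at x)"
    and c: "continuous_on UNIV h'"
    and z: "\<And>y. y \<in> E \<Longrightarrow> h y = 0 \<and> h' y = 0"
    and eps: "\<epsilon> > 0"
  shows "\<exists>r>0. \<forall>x. infdist x E < r \<longrightarrow> norm (h x) \<le> \<epsilon> * infdist x E"
proof -
  define U where "U = {z. norm (h' z) < \<epsilon>}"
  have "open U" unfolding U_def by (intro open_Collect_less continuous_intros c)
  have EU: "E \<subseteq> U" using z eps by (auto simp: U_def)
  obtain r where r: "r > 0" "\<And>z. infdist z E < r \<Longrightarrow> z \<in> U"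
  proof (cases "- U = {}")
    case True then show ?thesis using that[of 1] by auto
  next
    case False
    have cl: "closed (- U)" using \<open>open U\<close> by auto
    have pos: "setdist E (- U) > 0"
      using setdist_gt_0_compact_closed[OF E(1) cl] E(2) False EU by auto
    show ?thesis
    proof (rule that[OF pos])
      fix z assume zl: "infdist z E < setdist E (- U)"
      obtain p where p: "p \<in> E" "infdist z E = dist z p"
        using infdist_attains_inf[OF compact_imp_closed[OF E(1)] E(2)] by blast
      show "z \<in> U"
      proof (rule ccontr)
        assume "z \<notin> U"
        then have "setdist E (- U) \<le> dist p z" by (intro setdist_le_dist) (use p in auto)
        with zl p show False by (simp add: dist_commute)
      qed
    qed
  qed
  show ?thesis
  proof (intro exI[of _ r] conjI allI impI r(1))
    fix x assume xl: "infdist x E < r"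
    obtain p where p: "p \<in> E" "infdist x E = dist x p"
      using infdist_attains_inf[OF compact_imp_closed[OF E(1)] E(2)] by blast
    have seg: "z \<in> U" if "z \<in> closed_segment p x" for z
    proof (rule r(2))
      have "dist z p \<le> dist x p" using that
        by (metis dist_commute dist_in_closed_segment)
      then have "infdist z E \<le> dist x p" using infdist_le[OF p(1), of z] by linarith
      then show "infdist z E < r" using xl p by linarith
    qed
    have "norm (h x - h p) \<le> \<epsilon> * norm (x - p)"
    proof (rule differentiable_bound[where f'="\<lambda>z. blinfun_apply (h' z)" and S="closed_segment p x"])
      show "convex (closed_segment p x)" by simp
      show "(h has_derivative blinfun_apply (h' z)) (at z within closed_segment p x)" for z
        using d has_derivative_at_withinI by blast
      show "onorm (blinfun_apply (h' z)) \<le> \<epsilon>" if "z \<in> closed_segment p x" for z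
        using seg[OF that] by (simp add: U_def norm_blinfun.rep_eq[symmetric])
    qed auto
    then show "norm (h x) \<le> \<epsilon> * infdist x E" using z[OF p(1)] p(2) by (simp add: dist_norm)
  qed
qed

lemma periodic_range:
  fixes xs :: "real \<Rightarrow> 'a"
  assumes per: "\<forall>t. xs (t + T) = xs t" and T: "T > 0"
  shows "range xs = xs ` {0..T}"
proof -
  have nat: "xs (s + real m * T) = xs s" for m s
  proof (induction m)
    case (Suc m)
    have "xs (s + real (Suc m) * T) = xs ((s + real m * T) + T)" by (simp add: algebra_simps)
    also have "\<dots> = xs (s + real m * T)" using per by blast
    finally show ?case using Suc by simp
  qed simp
  have "xs t \<in> xs ` {0..T}" for t
  proof -
    define n where "n = floor (t / T)"
    define s where "s = t - of_int n * T"
    have "of_int n \<le> t / T" "t / T < of_int n + 1" unfolding n_def by linarith+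
    then have "of_int n * T \<le> t" "t < of_int n * T + T" using T by (auto simp: field_simps)
    then have s: "s \<in> {0..T}" unfolding s_def by auto
    have "xs t = xs s"
    proof (cases "n \<ge> 0")
      case True
      then have "t = s + real (nat n) * T" unfolding s_def by simp
      then show ?thesis using nat by simp
    next
      case False
      then have "s = t + real (nat (- n)) * T" unfolding s_def by simp
      then show ?thesis using nat by simp
    qed
    then show ?thesis using s by blast
  qed
  then show ?thesis by auto
qed

lemma bb_mv: "bounded_bilinear ((*v) :: real^'m^'n \<Rightarrow> real^'m \<Rightarrow> real^'n)"
proof (rule bounded_bilinear.intro)
  show "(a + a') *v b = a *v b + a' *v b" for a a' :: "real^'m^'n" and b by (simp add: algebra_simps)
  show "a *v (b + b') = a *v b + a *v b'" for a :: "real^'m^'n" and b b' by (simp add: algebra_simps)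
  show "(r *\<^sub>R a) *v b = r *\<^sub>R (a *v b)" for r and a :: "real^'m^'n" and b
    by (simp add: matrix_vector_mult_def vec_eq_iff sum_distrib_left mult.assoc)
  show "a *v (r *\<^sub>R b) = r *\<^sub>R (a *v b)" for r and a :: "real^'m^'n" and b
    by (simp add: algebra_simps)
  show "\<exists>K. \<forall>(a::real^'m^'n) b. norm (a *v b) \<le> norm a * norm b * K"
  proof -
    have "norm (a *v b) \<le> norm a * norm b * (real CARD('n) * real CARD('m))" for a :: "real^'m^'n" and b
    proof -
      have "norm (a *v b) \<le> (real CARD('n) * real CARD('m) * norm a) * norm b" by (rule mv_bound)
      also have "\<dots> = norm a * norm b * (real CARD('n) * real CARD('m))" by (simp add: mult_ac)
      finally show ?thesis .
    qed
    then show ?thesis by (intro exI[of _ "real CARD('n) * real CARD('m)"] allI)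
  qed
qed
lemma cont_mv:
  fixes A :: "'a::topological_space \<Rightarrow> real^'m^'n"
  shows "continuous_on S A \<Longrightarrow> continuous_on S v \<Longrightarrow> continuous_on S (\<lambda>x. A x *v v x)"
  by (rule bounded_bilinear.continuous_on[OF bb_mv])


theorem lemma5:
  fixes f :: "real^'n \<Rightarrow> real^'n"
    and g :: "real^'n \<Rightarrow> real^'m^'n"
    and \<Delta> :: "real^'n \<Rightarrow> real \<Rightarrow> real^'m"
    and \<Delta>M :: real
    and xs :: "real \<Rightarrow> real^'n"
    and T :: real
    and k :: "real^'n \<Rightarrow> real^'m"
    and \<sigma> :: "real^'n \<Rightarrow> real^'m"
  assumes dim: "CARD('m) < CARD('n)"
    and f_C2: "C2_on UNIV f"
    and g_indep: "\<forall>x. \<forall>c::real^'m. (\<Sum>j\<in>UNIV. c $ j *s column j (g x)) = 0 \<longrightarrow> c = 0"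
    and g_loclip: "\<forall>x. \<exists>e>0. \<exists>L. L-lipschitz_on (ball x e) g"
    and Delta_bound: "\<forall>x t. norm (\<Delta> x t) \<le> \<Delta>M"
    and T_pos: "T > 0"
    and xs_sol: "\<forall>t. (xs has_vector_derivative f (xs t)) (at t)"
    and xs_per: "\<forall>t. xs (t + T) = xs t"
    and f_nz: "\<forall>t. norm (f (xs t)) > 0"
    and k_C2: "C2_on UNIV k"
    and k_zero: "\<forall>t. k (xs t) = 0"
    and k_stab: "exp_orbitally_stable (\<lambda>y. f y + g y *v k y) (range xs)"
    and sigma_P1: "solves_problem1 f g \<Delta> k (range xs) \<sigma>"
  shows "\<exists>e>0. \<forall>x t0. sliding_motion f g \<Delta> \<sigma> (tube (range xs) e) x t0
            \<longrightarrow> ((\<lambda>t. infdist (x t) (range xs)) \<longlongrightarrow> 0) at_top"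
proof -
  define \<eta> where "\<eta> = range xs"
  have cont_xs: "continuous_on UNIV xs"
    using xs_sol by (meson continuous_at_imp_continuous_on has_vector_derivative_continuous)
  have eta_img: "\<eta> = xs ` {0..T}" unfolding \<eta>_def by (rule periodic_range[OF xs_per T_pos])
  have eta_c: "compact \<eta>" unfolding eta_img
    by (rule compact_continuous_image[OF continuous_on_subset[OF cont_xs]]) auto
  have eta_ne: "\<eta> \<noteq> {}" unfolding \<eta>_def by auto
  define d where "d x = infdist x \<eta>" for x
  have d_nn: "0 \<le> d x" for x by (simp add: d_def infdist_nonneg)
  obtain \<delta> C lam where \<delta>: "\<delta> > 0" and C: "C > 0" and lam: "lam > 0" and stab:
     "\<And>chi b. b \<ge> 0 \<Longrightarrow> (\<forall>t\<in>{0..b}. (chi has_vector_derivative (f (chi t) + g (chi t) *v k (chi t))) (at t within {0..b}))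
        \<Longrightarrow> d (chi 0) < \<delta> \<Longrightarrow> (\<forall>t\<in>{0..b}. d (chi t) \<le> C * exp (- lam * t) * d (chi 0))"
  proof -
    from k_stab obtain \<delta> C lam where "\<delta> > 0" "C > 0" "lam > 0" and st: "\<forall>chi b.
        b \<ge> 0 \<and> (\<forall>t\<in>{0..b}. (chi has_vector_derivative (f (chi t) + g (chi t) *v k (chi t))) (at t within {0..b}))
        \<and> infdist (chi 0) (range xs) < \<delta>
        \<longrightarrow> (\<forall>t\<in>{0..b}. infdist (chi t) (range xs) \<le> C * exp (- lam * t) * infdist (chi 0) (range xs))"
      unfolding exp_orbitally_stable_def by blast
    show ?thesis
    proof (rule that[OF \<open>\<delta> > 0\<close> \<open>C > 0\<close> \<open>lam > 0\<close>])
      fix chi b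
      assume a: "b \<ge> 0" "\<forall>t\<in>{0..b}. (chi has_vector_derivative (f (chi t) + g (chi t) *v k (chi t))) (at t within {0..b})"
        "d (chi 0) < \<delta>"
      have "infdist (chi 0) (range xs) < \<delta>" using a(3) by (simp add: d_def \<eta>_def)
      then have "\<forall>t\<in>{0..b}. infdist (chi t) (range xs) \<le> C * exp (- lam * t) * infdist (chi 0) (range xs)"
        using st a(1,2) by simp
      then show "\<forall>t\<in>{0..b}. d (chi t) \<le> C * exp (- lam * t) * d (chi 0)" by (simp add: d_def \<eta>_def)
    qed
  qed
  obtain e1 khat where e1: "e1 > 0" and khat_C1: "C1_on UNIV khat"
    and khat_eta0: "\<forall>y\<in>\<eta>. khat y = 0 \<and> frechet_derivative khat (at y) = frechet_derivative k (at y)"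
    and ueqs0: "\<forall>x\<in>{x. \<sigma> x = 0} \<inter> tube \<eta> e1. \<forall>t. ueq_set \<sigma> f g \<Delta> x t = {khat x - \<Delta> x t}"
    using sigma_P1 unfolding solves_problem1_def \<eta>_def by blast
  have khat_eta: "\<And>y. y \<in> \<eta> \<Longrightarrow> khat y = 0 \<and> frechet_derivative khat (at y) = frechet_derivative k (at y)"
    using khat_eta0 by blast
  have ueqs: "\<And>x t. \<sigma> x = 0 \<Longrightarrow> d x < e1 \<Longrightarrow> ueq_set \<sigma> f g \<Delta> x t = {khat x - \<Delta> x t}"
    using ueqs0 unfolding tube_def d_def by blast
  obtain f' where f'd: "\<And>x. (f has_derivative blinfun_apply (f' x)) (at x)" and f'c: "continuous_on UNIV f'"
    using C2_deriv[OF f_C2] by blast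
  obtain k' where k'd: "\<And>x. (k has_derivative blinfun_apply (k' x)) (at x)" and k'c: "continuous_on UNIV k'"
    using C2_deriv[OF k_C2] by blast
  obtain kh' where kh'd: "\<And>x. (khat has_derivative blinfun_apply (kh' x)) (at x)" and kh'c: "continuous_on UNIV kh'"
    using C1_deriv[OF khat_C1] by blast
  have k_eta: "y \<in> \<eta> \<Longrightarrow> k y = 0" for y using k_zero \<eta>_def by auto
  have kh'_eta: "kh' y - k' y = 0" if "y \<in> \<eta>" for y
  proof -
    have "blinfun_apply (kh' y) = blinfun_apply (k' y)"
      using khat_eta[OF that] frechet_derivative_at[OF kh'd, of y] frechet_derivative_at[OF k'd, of y] by simp
    then show ?thesis by (simp add: blinfun_apply_inject)
  qed
  have contf: "continuous_on UNIV f"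
    using f'd by (meson continuous_at_imp_continuous_on has_derivative_continuous)
  have contk: "continuous_on UNIV k"
    using k'd by (meson continuous_at_imp_continuous_on has_derivative_continuous)
  have contkh: "continuous_on UNIV khat"
    using kh'd by (meson continuous_at_imp_continuous_on has_derivative_continuous)
  have contg: "continuous_on UNIV g"
  proof (rule continuous_at_imp_continuous_on, intro ballI)
    fix x :: "real^'n"
    obtain e L where "e > 0" "L-lipschitz_on (ball x e) g" using g_loclip by blast
    then have "continuous_on (ball x e) g" by (intro lipschitz_on_continuous_on)
    then show "isCont g x" by (rule continuous_on_interior) (simp add: \<open>e > 0\<close>)
  qed

  obtain R0 where R0: "\<And>p. p \<in> \<eta> \<Longrightarrow> norm p \<le> R0"
    using compact_imp_bounded[OF eta_c] bounded_iff by blast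
  define K where "K = cball (0::real^'n) (R0 + 1)"
  have inK: "x \<in> K" if "d x < 1" for x
  proof -
    obtain p where p: "p \<in> \<eta>" "d x = dist x p"
      using infdist_attains_inf[OF compact_imp_closed[OF eta_c] eta_ne] d_def by metis
    have "norm x \<le> norm p + dist x p" by (metis dist_0_norm dist_commute dist_triangle)
    then show ?thesis using R0[OF p(1)] p(2) that by (simp add: K_def)
  qed
  have Kc: "compact K" and Kcv: "convex K" and Kcl: "closed K" unfolding K_def by auto
  have Kne: "K \<noteq> {}" using inK[of "xs 0"] by (auto simp: d_def \<eta>_def)
  define F1 where "F1 x = f x + g x *v k x" for x
  define F2 where "F2 x = f x + g x *v khat x" for x
  obtain Lf where Lf: "Lf-lipschitz_on K f" using C1_lip_cball[OF f'd f'c] K_def by blast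
  obtain Lk where Lk: "Lk-lipschitz_on K k" using C1_lip_cball[OF k'd k'c] K_def by blast
  obtain Lg where Lg: "Lg-lipschitz_on K g" using loclip_compact[OF g_loclip Kc] by blast
  obtain Gb where Gb: "\<And>x. x \<in> K \<Longrightarrow> norm (g x) \<le> Gb" "Gb \<ge> 0"
  proof -
    obtain B where "\<And>x. x \<in> K \<Longrightarrow> norm (g x) \<le> B"
      using compact_imp_bounded[OF compact_continuous_image[OF continuous_on_subset[OF contg] Kc]]
      by (auto simp: bounded_iff)
    then show ?thesis using that[of "max B 0"] by fastforce
  qed
  obtain Kb where Kb: "\<And>x. x \<in> K \<Longrightarrow> norm (k x) \<le> Kb" "Kb \<ge> 0"
  proof -
    obtain B where "\<And>x. x \<in> K \<Longrightarrow> norm (k x) \<le> B"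
      using compact_imp_bounded[OF compact_continuous_image[OF continuous_on_subset[OF contk] Kc]]
      by (auto simp: bounded_iff)
    then show ?thesis using that[of "max B 0"] by fastforce
  qed
  define cc where "cc = real CARD('n) * real CARD('m)"
  have cc: "cc \<ge> 0" by (simp add: cc_def)
  have mvb: "norm (A *v v) \<le> cc * norm A * norm v" for A :: "real^'m^'n" and v
    using mv_bound[of A v] by (simp add: cc_def)
  define L where "L = Lf + cc * Lg * Kb + cc * Gb * Lk + 1"
  have Lpos: "L > 0"
  proof -
    have "0 \<le> cc * Lg * Kb" using lipschitz_on_nonneg[OF Lg] cc Kb(2) by (intro mult_nonneg_nonneg) auto
    moreover have "0 \<le> cc * Gb * Lk" using lipschitz_on_nonneg[OF Lk] cc Gb(2) by (intro mult_nonneg_nonneg) auto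
    ultimately show ?thesis using lipschitz_on_nonneg[OF Lf] by (simp add: L_def)
  qed
  have F1_lip: "norm (F1 x - F1 y) \<le> L * norm (x - y)" if "x \<in> K" "y \<in> K" for x y
  proof -
    have eq: "F1 x - F1 y = (f x - f y) + ((g x - g y) *v k x) + (g y *v (k x - k y))"
      by (simp add: F1_def algebra_simps)
    have 1: "norm (f x - f y) \<le> Lf * norm (x - y)"
      using lipschitz_onD[OF Lf that] by (simp add: dist_norm)
    have 2: "norm ((g x - g y) *v k x) \<le> cc * Lg * Kb * norm (x - y)"
    proof -
      have "norm ((g x - g y) *v k x) \<le> cc * norm (g x - g y) * norm (k x)" by (rule mvb)
      also have "\<dots> \<le> cc * (Lg * norm (x - y)) * Kb"
        using lipschitz_onD[OF Lg that] Kb(1)[OF that(1)] Kb(2) cc lipschitz_on_nonneg[OF Lg]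
        by (intro mult_mono mult_left_mono) (auto simp: dist_norm)
      finally show ?thesis by (simp add: algebra_simps)
    qed
    have 3: "norm (g y *v (k x - k y)) \<le> cc * Gb * Lk * norm (x - y)"
    proof -
      have "norm (g y *v (k x - k y)) \<le> cc * norm (g y) * norm (k x - k y)" by (rule mvb)
      also have "\<dots> \<le> cc * Gb * (Lk * norm (x - y))"
        using lipschitz_onD[OF Lk that] Gb(1)[OF that(2)] cc Gb(2)
        by (intro mult_mono mult_left_mono) (auto simp: dist_norm)
      finally show ?thesis by (simp add: algebra_simps)
    qed
    have "norm (F1 x - F1 y) \<le> Lf * norm (x - y) + cc * Lg * Kb * norm (x - y) + cc * Gb * Lk * norm (x - y)"
    proof -
      have "norm (F1 x - F1 y) \<le> norm (f x - f y) + norm ((g x - g y) *v k x) + norm (g y *v (k x - k y))"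
        unfolding eq by (rule order_trans[OF norm_triangle_ineq add_right_mono[OF norm_triangle_ineq]])
      then show ?thesis using 1 2 3 by linarith
    qed
    also have "\<dots> \<le> L * norm (x - y)" by (simp add: L_def algebra_simps)
    finally show ?thesis .
  qed
  have contF1: "continuous_on K F1"
    by (rule lipschitz_on_continuous_on[of L]) (use F1_lip Lpos in \<open>auto intro!: lipschitz_onI simp: dist_norm\<close>)
  have contF2: "continuous_on UNIV F2"
    unfolding F2_def by (intro continuous_intros contf contg contkh cont_mv) 
  define G where "G x = F1 (closest_point K x)" for x
  have G_lip: "norm (G x - G y) \<le> L * norm (x - y)" for x y
  proof -
    have "norm (G x - G y) \<le> L * norm (closest_point K x - closest_point K y)"
      unfolding G_def by (rule F1_lip; rule closest_point_in_set[OF Kcl Kne])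
    also have "\<dots> \<le> L * norm (x - y)"
      using closest_point_lipschitz[OF Kcv Kcl Kne, of x y] Lpos by (simp add: dist_norm)
    finally show ?thesis .
  qed
  have G_eq: "G x = F1 x" if "x \<in> K" for x unfolding G_def using closest_point_self[OF that] by simp
  obtain BF where BF: "\<And>x. norm (G x) \<le> BF"
  proof -
    obtain B where "\<And>x. x \<in> K \<Longrightarrow> norm (F1 x) \<le> B"
      using compact_imp_bounded[OF compact_continuous_image[OF contF1 Kc]] by (auto simp: bounded_iff)
    then show ?thesis using that closest_point_in_set[OF Kcl Kne] unfolding G_def by blast
  qed

  define \<tau> where "\<tau> = ln (4 * C + 1) / lam + 1"
  have tau_pos: "\<tau> > 0" using C lam by (simp add: \<tau>_def add_pos_nonneg)
  have tau_dec: "C * exp (- lam * \<tau>) \<le> 1/4"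
  proof -
    have "- lam * \<tau> = - ln (4 * C + 1) + (- lam)" using lam by (simp add: \<tau>_def field_simps)
    then have "exp (- lam * \<tau>) = exp (- ln (4 * C + 1)) * exp (- lam)" by (simp only: exp_add)
    also have "\<dots> = exp (- lam) / (4 * C + 1)" using C by (simp add: exp_minus field_simps)
    also have "\<dots> \<le> 1 / (4 * C + 1)" using C lam by (intro divide_right_mono) auto
    finally have E: "exp (- lam * \<tau>) \<le> 1 / (4 * C + 1)" .
    have "C * exp (- lam * \<tau>) \<le> C * (1 / (4 * C + 1))" using C by (intro mult_left_mono[OF E]) auto
    also have "\<dots> = C / (4 * C + 1)" by simp
    finally have "C * exp (- lam * \<tau>) \<le> C / (4 * C + 1)" .
    also have "\<dots> \<le> 1/4" using C by (simp add: field_simps)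
    finally show ?thesis .
  qed
  define \<epsilon>' where "\<epsilon>' = 1 / (4 * (\<tau> * C + 1) * exp ((L + 1) * \<tau>))"
  have eps'_pos: "\<epsilon>' > 0" using tau_pos C by (simp add: \<epsilon>'_def add_pos_nonneg)
  have eps'_le1: "\<epsilon>' \<le> 1"
  proof -
    have a: "1 \<le> \<tau> * C + 1" using tau_pos C by simp
    have b: "1 \<le> exp ((L + 1) * \<tau>)" using tau_pos Lpos by simp
    have "1 * 1 \<le> (\<tau> * C + 1) * exp ((L + 1) * \<tau>)" by (rule mult_mono[OF a b]) (use a in auto)
    then have "1 \<le> 4 * ((\<tau> * C + 1) * exp ((L + 1) * \<tau>))" by linarith
    then have "1 \<le> 4 * (\<tau> * C + 1) * exp ((L + 1) * \<tau>)" by (simp only: mult.assoc)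
    then show ?thesis by (simp add: \<epsilon>'_def)
  qed
  have eps'_key: "\<epsilon>' * C * D * \<tau> * exp ((L + 1) * \<tau>) \<le> D / 4" if "D \<ge> 0" for D
  proof -
    have "\<epsilon>' * C * D * \<tau> * exp ((L + 1) * \<tau>) = D * (\<tau> * C) / (4 * (\<tau> * C + 1))"
    proof -
      have gen: "1 / (a * E) * C * D * \<tau> * E = D * (\<tau> * C) / a"
        if "E > 0" "a > 0" for E a using that by (simp add: field_simps)
      have "4 * (\<tau> * C + 1) > 0" using tau_pos C by (simp add: add_pos_nonneg)
      then show ?thesis unfolding \<epsilon>'_def by (intro gen) simp_all
    qed
    also have "\<dots> \<le> D / 4"
    proof -
      have gen: "D * a / (4 * (a + 1)) \<le> D / 4" if "a \<ge> 0" for a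
      proof -
        have "D * a / (4 * (a + 1)) = (D / 4) * (a / (a + 1))" by simp
        also have "\<dots> \<le> (D / 4) * 1"
          using that \<open>D \<ge> 0\<close> by (intro mult_left_mono) auto
        finally show ?thesis by simp
      qed
      show ?thesis by (rule gen) (use tau_pos C in simp)
    qed
    finally show ?thesis .
  qed
  obtain r1 where r1: "r1 > 0" and r1b: "\<And>x. d x < r1 \<Longrightarrow> norm (khat x - k x) \<le> \<epsilon>' / (cc * Gb + 1) * d x"
  proof -
    have hd: "((\<lambda>x. khat x - k x) has_derivative blinfun_apply (kh' x - k' x)) (at x)" for x
    proof -
      have e: "blinfun_apply (kh' x - k' x) = (\<lambda>h. kh' x h - k' x h)" by (rule ext) (simp add: blinfun.diff_left)
      show ?thesis unfolding e by (rule has_derivative_diff[OF kh'd k'd])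
    qed
    have pe: "0 < \<epsilon>' / (cc * Gb + 1)"
      using eps'_pos cc Gb(2) by (intro divide_pos_pos) (auto intro: add_nonneg_pos mult_nonneg_nonneg)
    have "\<exists>r>0. \<forall>x. infdist x \<eta> < r \<longrightarrow> norm (khat x - k x) \<le> \<epsilon>' / (cc * Gb + 1) * infdist x \<eta>"
      by (rule little_o_dist[OF eta_c eta_ne hd _ _ pe])
        (use kh'c k'c khat_eta k_eta kh'_eta in \<open>auto intro!: continuous_intros\<close>)
    then show ?thesis using that unfolding d_def by blast
  qed
  have F21: "norm (F2 x - F1 x) \<le> \<epsilon>' * d x" if "d x < r1" "x \<in> K" for x
  proof -
    have "F2 x - F1 x = g x *v (khat x - k x)" by (simp add: F1_def F2_def algebra_simps)
    then have "norm (F2 x - F1 x) \<le> cc * norm (g x) * norm (khat x - k x)" using mvb by simp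
    also have "\<dots> \<le> cc * Gb * (\<epsilon>' / (cc * Gb + 1) * d x)"
      using Gb r1b[OF that(1)] cc by (intro mult_mono mult_left_mono) (auto intro: that(2))
    also have "\<dots> = (cc * Gb / (cc * Gb + 1)) * \<epsilon>' * d x" by simp
    also have "\<dots> \<le> 1 * \<epsilon>' * d x"
    proof -
      have g1: "a / (a + 1) \<le> 1" if "a \<ge> 0" for a :: real using that by simp
      have "cc * Gb / (cc * Gb + 1) \<le> 1" by (rule g1) (use cc Gb(2) in simp)
      then show ?thesis using eps'_pos d_nn[of x] by (intro mult_right_mono) auto
    qed
    finally show ?thesis by simp
  qed
  define e where "e = min \<delta> (min e1 (min r1 (1 / (2 * C + 2))))"
  have e_pos: "e > 0" using \<delta> e1 r1 C by (simp add: e_def)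
  show ?thesis
  proof (intro exI[of _ e] conjI allI impI e_pos)
    fix x :: "real \<Rightarrow> real^'n" and t0
    assume sm: "sliding_motion f g \<Delta> \<sigma> (tube (range xs) e) x t0"
    have xin: "d (x t) < e \<and> (x has_vector_derivative F2 (x t)) (at t within {t0..})" if "t \<ge> t0" for t
    proof -
      have 1: "\<sigma> (x t) = 0" "d (x t) < e"
        and 2: "(x has_vector_derivative (f (x t) + g (x t) *v (ueq \<sigma> f g \<Delta> (x t) t + \<Delta> (x t) t))) (at t within {t0..})"
        using sm that unfolding sliding_motion_def tube_def d_def \<eta>_def by auto
      have "ueq \<sigma> f g \<Delta> (x t) t = khat (x t) - \<Delta> (x t) t"
        unfolding ueq_def using ueqs[OF 1(1), of t] 1(2) by (simp add: e_def)
      with 1 2 show ?thesis by (simp add: F2_def)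
    qed
    have e_le: "e \<le> \<delta>" "e \<le> r1" "e \<le> 1 / (2 * C + 2)" by (auto simp: e_def)
    have e_half: "e \<le> 1/2"
    proof -
      have "1 / (2 * C + 2) \<le> 1 / 2" using C by (intro divide_left_mono) auto
      then show ?thesis using e_le(3) by linarith
    qed
    have step: "d (x (s + \<tau>)) \<le> d (x s) / 2 \<and> (\<forall>u\<in>{0..\<tau>}. d (x (s + u)) \<le> (C + 1) * d (x s))"
      if s: "t0 \<le> s" for s
    proof -
      define D where "D = d (x s)"
      have D: "0 \<le> D" "D < e" using xin[OF s] d_nn by (auto simp: D_def)
      have CD: "C * D < 1/2" "D < 1/2"
      proof -
        have "D * (2 * C + 2) < e * (2 * C + 2)" using D C by (intro mult_strict_right_mono) auto
        also have "e * (2 * C + 2) \<le> 1" using e_le(3) C by (simp add: field_simps)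
        finally have "D * (2 * C + 2) < 1" .
        moreover have "D * (2 * C + 2) = 2 * (C * D) + 2 * D" by (simp add: algebra_simps)
        moreover have "0 \<le> C * D" using D C by simp
        ultimately show "C * D < 1/2" "D < 1/2" using D by linarith+
      qed
      define xx where "xx u = x (s + u)" for u
      have xx_d: "(xx has_vector_derivative F2 (xx u)) (at u within {0..\<tau>})" if "u \<in> {0..\<tau>}" for u
      proof -
        have "(x has_vector_derivative F2 (x (s + u))) (at (s + u) within {t0..})"
          using xin[of "s + u"] that s by auto
        then have "(x has_vector_derivative F2 (x (s + u))) (at (s + u) within (\<lambda>u. s + u) ` {0..\<tau>})"
          by (rule has_vector_derivative_within_subset) (use s in auto)
        moreover have "((\<lambda>u. s + u) has_vector_derivative 1) (at u within {0..\<tau>})"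
          by (auto intro!: derivative_eq_intros)
        ultimately have "(((\<lambda>u. x u) \<circ> (\<lambda>u. s + u)) has_vector_derivative (1 *\<^sub>R F2 (x (s + u)))) (at u within {0..\<tau>})"
          using vector_diff_chain_within by blast
        then show ?thesis by (simp add: o_def xx_def[abs_def])
      qed
      have xx_e: "d (xx u) < e" if "u \<ge> 0" for u using xin[of "s + u"] that s by (auto simp: xx_def)
      have xx_K: "xx u \<in> K" if "u \<ge> 0" for u
        by (rule inK) (use xx_e[OF that] e_half in linarith)
      have xx_c: "continuous_on {0..\<tau>} xx"
        using xx_d by (meson continuous_on_eq_continuous_within has_vector_derivative_continuous)
      obtain y where y0: "y 0 = x s" and yd: "\<forall>u\<in>{0..\<tau>}. (y has_vector_derivative G (y u)) (at u within {0..\<tau>})"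
        using ode_exists[OF G_lip Lpos BF, of \<tau> "x s"] tau_pos by auto
      have y_c: "continuous_on {0..\<tau>} y"
        using yd by (meson continuous_on_eq_continuous_within has_vector_derivative_continuous)
      have dy_c: "continuous_on {0..\<tau>} (\<lambda>u. d (y u))"
        unfolding d_def by (intro continuous_intros y_c)
      have sol: "\<forall>u\<in>{0..b}. d (y u) \<le> C * exp (- lam * u) * D"
        if b: "b \<in> {0..\<tau>}" and inside: "\<forall>u\<in>{0..b}. d (y u) < 1" for b
      proof -
        have "\<forall>u\<in>{0..b}. (y has_vector_derivative (f (y u) + g (y u) *v k (y u))) (at u within {0..b})"
        proof
          fix u assume u: "u \<in> {0..b}"
          have "(y has_vector_derivative G (y u)) (at u within {0..b})"
            by (rule has_vector_derivative_within_subset[of _ _ _ "{0..\<tau>}"]) (use yd u b in auto)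
          moreover have "G (y u) = F1 (y u)" using G_eq inK inside u by blast
          ultimately show "(y has_vector_derivative (f (y u) + g (y u) *v k (y u))) (at u within {0..b})"
            by (simp add: F1_def)
        qed
        moreover have "d (y 0) < \<delta>" using y0 D e_le(1) by (simp add: D_def)
        ultimately show ?thesis using stab[of b y] b y0 by (simp add: D_def)
      qed
      have expCD: "C * exp (- lam * u) * D \<le> C * D" if "u \<ge> 0" for u
        using that C lam D by (intro mult_right_mono) (auto simp: mult_le_cancel_left1)
      have stay: "\<forall>u\<in>{0..\<tau>}. d (y u) < 1/2"
      proof (rule ccontr)
        assume nt: "\<not> ?thesis"
        define S where "S = {u\<in>{0..\<tau>}. 1/2 \<le> d (y u)}"
        have Sne: "S \<noteq> {}" using nt by (auto simp: S_def not_less)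
        have "S = {0..\<tau>} \<inter> (\<lambda>u. d (y u)) -` {1/2..}" by (auto simp: S_def)
        then have Scl: "closed S" using continuous_closed_preimage[OF dy_c] by auto
        have Sbd: "bdd_below S" by (auto simp: S_def intro!: bdd_belowI[of _ 0])
        define t1 where "t1 = Inf S"
        have t1S: "t1 \<in> S" using closed_contains_Inf[OF Sne Sbd Scl] by (simp add: t1_def)
        have below: "d (y u) < 1/2" if "u \<in> {0..<t1}" for u
        proof (rule ccontr)
          assume "\<not> d (y u) < 1/2"
          then have "u \<in> S" using that t1S by (auto simp: S_def)
          then have "t1 \<le> u" unfolding t1_def by (rule cInf_lower[OF _ Sbd])
          with that show False by auto
        qed
        have t1pos: "0 < t1"
        proof -
          have "t1 \<noteq> 0" using t1S y0 CD by (auto simp: S_def D_def)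
          then show ?thesis using t1S by (auto simp: S_def)
        qed
        have bnd: "d (y u) \<le> C * D" if "u \<in> {0..<t1}" for u
        proof -
          have "u \<in> {0..\<tau>}" using that t1S by (auto simp: S_def)
          moreover have "\<forall>v\<in>{0..u}. d (y v) < 1" using below that by fastforce
          ultimately have "d (y u) \<le> C * exp (- lam * u) * D" using sol that by auto
          then show ?thesis using expCD[of u] that by auto
        qed
        have "d (y t1) \<le> C * D"
        proof (rule continuous_le_on_closure[of "{0..<t1}" "\<lambda>u. d (y u)"])
          show "continuous_on (closure {0..<t1}) (\<lambda>u. d (y u))"
            using t1pos t1S by (auto simp: S_def intro: continuous_on_subset[OF dy_c])
          show "t1 \<in> closure {0..<t1}" using t1pos by simp
        qed (rule bnd)
        then show False using t1S CD by (auto simp: S_def)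
      qed
      have ybound: "\<forall>u\<in>{0..\<tau>}. d (y u) \<le> C * exp (- lam * u) * D"
      proof -
        have "\<forall>u\<in>{0..\<tau>}. d (y u) < 1" using stay by fastforce
        then show ?thesis using sol[of \<tau>] tau_pos by auto
      qed
      have yK: "y u \<in> K" if "u \<in> {0..\<tau>}" for u using stay that inK by fastforce
      have yd1: "(y has_vector_derivative F1 (y u)) (at u within {0..\<tau>})" if "u \<in> {0..\<tau>}" for u
        using yd that G_eq[OF yK[OF that]] by metis
      define w where "w u = norm (xx u - y u)" for u
      have w_c: "continuous_on {0..\<tau>} w" unfolding w_def by (intro continuous_intros xx_c y_c)
      have F2xx_c: "continuous_on {0..\<tau>} (\<lambda>v. F2 (xx v))"
        by (rule continuous_on_compose2[OF contF2 xx_c]) auto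
      have F1y_c: "continuous_on {0..\<tau>} (\<lambda>v. F1 (y v))"
        by (rule continuous_on_compose2[OF contF1 y_c]) (use yK in auto)
      have wint: "w u \<le> \<epsilon>' * C * D * \<tau> + (L + \<epsilon>') * integral {0..u} w" if u: "u \<in> {0..\<tau>}" for u
      proof -
        have hi: "((\<lambda>v. F2 (xx v) - F1 (y v)) has_integral (xx u - y u - (xx 0 - y 0))) {0..u}"
        proof (rule fundamental_theorem_of_calculus)
          show "0 \<le> u" using u by auto
          fix v assume v: "v \<in> {0..u}"
          have vt: "v \<in> {0..\<tau>}" using v u by auto
          have "(xx has_vector_derivative F2 (xx v)) (at v within {0..u})"
            by (rule has_vector_derivative_within_subset[OF xx_d[OF vt]]) (use u in auto)
          moreover have "(y has_vector_derivative F1 (y v)) (at v within {0..u})"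
            by (rule has_vector_derivative_within_subset[OF yd1[OF vt]]) (use u in auto)
          ultimately show "((\<lambda>v. xx v - y v) has_vector_derivative (F2 (xx v) - F1 (y v))) (at v within {0..u})"
            by (rule has_vector_derivative_diff)
        qed
        have x0y0: "xx 0 = y 0" using y0 by (simp add: xx_def)
        have pt: "norm (F2 (xx v) - F1 (y v)) \<le> \<epsilon>' * C * D + (L + \<epsilon>') * w v" if v: "v \<in> {0..u}" for v
        proof -
          have vt: "v \<in> {0..\<tau>}" using v u by auto
          have a: "norm (F2 (xx v) - F1 (xx v)) \<le> \<epsilon>' * d (xx v)"
            by (rule F21) (use xx_e[of v] e_le(2) vt xx_K[of v] in auto)
          have b: "norm (F1 (xx v) - F1 (y v)) \<le> L * w v"
            unfolding w_def by (rule F1_lip) (use xx_K[of v] yK[OF vt] vt in auto)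
          have c: "d (xx v) \<le> d (y v) + w v"
            unfolding d_def w_def using infdist_triangle[of "xx v" \<eta> "y v"] by (simp add: dist_norm)
          have c2: "d (y v) \<le> C * D" using ybound vt expCD[of v] by fastforce
          have "norm (F2 (xx v) - F1 (y v)) \<le> norm (F2 (xx v) - F1 (xx v)) + norm (F1 (xx v) - F1 (y v))"
            by (rule order_trans[OF _ norm_triangle_ineq]) simp
          also have "\<dots> \<le> \<epsilon>' * (C * D + w v) + L * w v"
            using a b c c2 eps'_pos by (smt (verit) mult_left_mono)
          finally show ?thesis by (simp add: algebra_simps)
        qed
        have int1: "(\<lambda>v. F2 (xx v) - F1 (y v)) integrable_on {0..u}" using hi by blast
        have wc_u: "continuous_on {0..u} w" using w_c u by (auto intro: continuous_on_subset)
        have int2: "(\<lambda>v. \<epsilon>' * C * D + (L + \<epsilon>') * w v) integrable_on {0..u}"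
          by (rule integrable_continuous_interval) (intro continuous_intros wc_u)
        have "w u = norm (integral {0..u} (\<lambda>v. F2 (xx v) - F1 (y v)))"
          using integral_unique[OF hi] x0y0 by (simp add: w_def)
        also have "\<dots> \<le> integral {0..u} (\<lambda>v. \<epsilon>' * C * D + (L + \<epsilon>') * w v)"
          by (rule integral_norm_bound_integral[OF int1 int2 pt])
        also have "\<dots> = \<epsilon>' * C * D * u + (L + \<epsilon>') * integral {0..u} w"
        proof -
          have wi: "w integrable_on {0..u}" by (rule integrable_continuous_interval[OF wc_u])
          have "integral {0..u} (\<lambda>v. \<epsilon>' * C * D + (L + \<epsilon>') * w v)
              = integral {0..u} (\<lambda>v. \<epsilon>' * C * D) + integral {0..u} (\<lambda>v. (L + \<epsilon>') * w v)"
            by (rule Henstock_Kurzweil_Integration.integral_add) (use integrable_on_cmult_left[OF wi] in auto)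
          then show ?thesis using u by simp
        qed
        also have "\<dots> \<le> \<epsilon>' * C * D * \<tau> + (L + \<epsilon>') * integral {0..u} w"
          using u eps'_pos C D by (auto intro!: mult_left_mono)
        finally show ?thesis .
      qed
      have wb: "w u \<le> D / 4" if u: "u \<in> {0..\<tau>}" for u
      proof -
        have "w u \<le> (\<epsilon>' * C * D * \<tau>) * exp ((L + \<epsilon>') * u)"
          by (rule gronwall[OF w_c _ _ wint u]) (use eps'_pos C D tau_pos Lpos in auto)
        also have "\<dots> \<le> (\<epsilon>' * C * D * \<tau>) * exp ((L + 1) * \<tau>)"
          using eps'_pos C D tau_pos Lpos u eps'_le1
          by (intro mult_left_mono) (auto intro!: mult_mono)
        also have "\<dots> \<le> D / 4" using eps'_key[OF D(1)] by simp
        finally show ?thesis .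
      qed
      have dxx: "d (xx u) \<le> d (y u) + w u" for u
        unfolding d_def w_def using infdist_triangle[of "xx u" \<eta> "y u"] by (simp add: dist_norm)
      have "d (x (s + \<tau>)) \<le> C * exp (- lam * \<tau>) * D + D / 4"
      proof -
        have t: "\<tau> \<in> {0..\<tau>}" using tau_pos by auto
        have "d (x (s + \<tau>)) = d (xx \<tau>)" by (simp add: xx_def)
        then show ?thesis using dxx[of \<tau>] ybound[rule_format, OF t] wb[OF t] by linarith
      qed
      also have "\<dots> \<le> D / 2"
      proof -
        have "C * exp (- lam * \<tau>) * D \<le> 1/4 * D" by (rule mult_right_mono[OF tau_dec D(1)])
        then show ?thesis by linarith
      qed
      finally have A: "d (x (s + \<tau>)) \<le> d (x s) / 2" by (simp add: D_def)
      have B: "d (x (s + u)) \<le> (C + 1) * d (x s)" if "u \<in> {0..\<tau>}" for u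
      proof -
        have "d (x (s + u)) \<le> C * D + D / 4"
          using dxx[of u] ybound that wb[OF that] expCD[of u] by (fastforce simp: xx_def)
        also have "\<dots> \<le> (C + 1) * D" using D by (simp add: algebra_simps)
        finally show ?thesis by (simp add: D_def)
      qed
      show ?thesis using A B by blast
    qed
    define D0 where "D0 = d (x t0)"
    have iter: "d (x (t0 + real n * \<tau>)) \<le> (1/2)^n * D0" for n
    proof (induction n)
      case 0 then show ?case by (simp add: D0_def)
    next
      case (Suc n)
      have eq: "t0 + real (Suc n) * \<tau> = (t0 + real n * \<tau>) + \<tau>" by (simp add: algebra_simps)
      have "d (x (t0 + real (Suc n) * \<tau>)) \<le> d (x (t0 + real n * \<tau>)) / 2"
        unfolding eq by (rule conjunct1[OF step]) (use tau_pos in simp)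
      also have "\<dots> \<le> (1/2)^n * D0 / 2" using Suc by simp
      finally show ?case by simp
    qed
    have between: "d (x t) \<le> (C + 1) * ((1/2)^n * D0)" if "t \<ge> t0 + real n * \<tau>" for t n
    proof -
      define m where "m = nat (floor ((t - t0) / \<tau>))"
      have "real n \<le> (t - t0) / \<tau>" using that tau_pos by (simp add: field_simps)
      then have mn: "n \<le> m" unfolding m_def by linarith
      have fl: "real m \<le> (t - t0) / \<tau>" "(t - t0) / \<tau> < real m + 1"
        using that tau_pos \<open>real n \<le> (t - t0) / \<tau>\<close> unfolding m_def by linarith+
      define u where "u = t - (t0 + real m * \<tau>)"
      have u: "u \<in> {0..\<tau>}" using fl tau_pos by (auto simp: u_def field_simps)
      have "d (x t) = d (x ((t0 + real m * \<tau>) + u))" by (simp add: u_def)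
      also have "\<dots> \<le> (C + 1) * d (x (t0 + real m * \<tau>))"
        using conjunct2[OF step[of "t0 + real m * \<tau>"]] u tau_pos by simp
      also have "\<dots> \<le> (C + 1) * ((1/2)^m * D0)"
        using iter[of m] C by (intro mult_left_mono) auto
      also have "\<dots> \<le> (C + 1) * ((1/2)^n * D0)"
        using mn C d_nn[of "x t0"] by (intro mult_left_mono mult_right_mono power_decreasing) (auto simp: D0_def)
      finally show ?thesis .
    qed
    show "((\<lambda>t. infdist (x t) (range xs)) \<longlongrightarrow> 0) at_top"
    proof (rule tendstoI)
      fix \<epsilon> :: real assume \<epsilon>: "\<epsilon> > 0"
      have D0nn: "0 \<le> D0" using d_nn by (simp add: D0_def)
      have den: "0 < (C + 1) * D0 + 1" using C D0nn by (simp add: add_nonneg_pos)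
      have "\<forall>\<^sub>F n in sequentially. \<bar>(1/2::real)^n\<bar> < \<epsilon> / ((C + 1) * D0 + 1)"
        by (rule Archimedean_eventually_pow_inverse) (use \<epsilon> den in auto)
      then obtain N where N: "(1/2::real)^N < \<epsilon> / ((C + 1) * D0 + 1)"
        unfolding eventually_sequentially by auto
      show "\<forall>\<^sub>F t in at_top. dist (infdist (x t) (range xs)) 0 < \<epsilon>"
        unfolding eventually_at_top_linorder
      proof (intro exI[of _ "t0 + real N * \<tau>"] allI impI)
        fix t assume "t \<ge> t0 + real N * \<tau>"
        then have "d (x t) \<le> (C + 1) * ((1/2)^N * D0)" by (rule between)
        also have "\<dots> \<le> ((C + 1) * D0 + 1) * (1/2)^N" using C D0nn by (simp add: algebra_simps)
        also have "\<dots> < ((C + 1) * D0 + 1) * (\<epsilon> / ((C + 1) * D0 + 1))"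
          using N C D0nn by (intro mult_strict_left_mono) (auto intro: add_nonneg_pos)
        also have "\<dots> = \<epsilon>"
        proof -
          have g: "a * (b / a) = b" if "a > 0" for a b :: real using that by simp
          show ?thesis by (rule g[OF den])
        qed
        finally show "dist (infdist (x t) (range xs)) 0 < \<epsilon>" using d_nn[of "x t"] by (simp add: d_def \<eta>_def)
      qed
    qed
  qed
qed

end
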